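(* Consider the two-bus model described in the context, with fixed parameters $0<\alpha_1\le\alpha_2$, $B_1,B_2>0$, $\overline f_1,\overline f_2>0$. Let $\boldsymbol\omega=(\overline{\mathbf q},\mathbf d)$ and $\boldsymbol\omega'=(\overline{\mathbf q}',\mathbf d)$ be two instances with the same demand profile $\mathbf d=(d_1,d_2)$, $d_1+d_2>0$, with $\overline q_2'=\overline q_2$ and $\overline q_1'\le \overline q_1$, both feasible for \textsf{ED-2b} and \textsf{SCED-2b}. Then $\mathsf{PoS}(\boldsymbol\omega')\le \mathsf{PoS}(\boldsymbol\omega)$.
   Context: Two-bus network: buses $v_1,v_2$ joined by two parallel lines $e_1,e_2$ with susceptances $B_1,B_2>0$ and thermal limits $\overline f_1,\overline f_2>0$. Bus $i\in\{1,2\}$ has a generator with capacity $\overline q_i\ge 0$ and linear cost $\alpha_i q_i$, and a demand $d_i\ge 0$; throughout $0<\alpha_1\le\alpha_2$ (bus 1 is the cheap bus). An instance is $\boldsymbol\omega=(\overline{\mathbf q},\mathbf d)$ with $\overline{\mathbf q}=(\overline q_1,\overline q_2)$, $\mathbf d=(d_1,d_2)$. Define $f^{\mathsf{ed}}:=(B_1+B_2)\min\{\overline f_1/B_1,\overline f_2/B_2\}$ and $f^{\mathsf{sc}}:=\min\{\overline f_1,\overline f_2\}$ (note $f^{\mathsf{sc}}\le f^{\mathsf{ed}}$). The economic dispatch problem \textsf{ED-2b} is: minimize $\alpha_1q_1+\alpha_2q_2$ over $(q_1,q_2)$ subject to $0\le q_1\le\overline q_1$, $0\le q_2\le\overline q_2$,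 $q_1+q_2=d_1+d_2$, and $-f^{\mathsf{ed}}\le q_1-d_1\le f^{\mathsf{ed}}$ (equivalently, under the DC model, the flows $B_k(q_1-d_1)/(B_1+B_2)$ on line $e_k$ satisfy $|{\cdot}|\le\overline f_k$, $k=1,2$). The security-constrained problem \textsf{SCED-2b} is the same problem with the additional constraint $-f^{\mathsf{sc}}\le q_1-d_1\le f^{\mathsf{sc}}$ (the flow $q_1-d_1$ on the surviving line after the outage of either line must respect that line's limit). Let $c^\star_{\mathsf{ed}}(\boldsymbol\omega)$ and $c^\star_{\mathsf{sc}}(\boldsymbol\omega)$ be the optimal values of \textsf{ED-2b} and \textsf{SCED-2b} for an instance $\boldsymbol\omega$ feasible for both. The price of security of $\boldsymbol\omega$ is $\mathsf{PoS}(\boldsymbol\omega):=c^\star_{\mathsf{sc}}(\boldsymbol\omega)/c^\star_{\mathsf{ed}}(\boldsymbol\omega)$. *)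

theory Defs
  imports Complex_Main
begin

text \<open>Parameters: line susceptances B1 B2, thermal limits fb1 fb2,
  cost coefficients a1 a2.\<close>

definition f_ed :: "real \<Rightarrow> real \<Rightarrow> real \<Rightarrow> real \<Rightarrow> real" where
  "f_ed B1 B2 fb1 fb2 = (B1 + B2) * min (fb1 / B1) (fb2 / B2)"

definition f_sc :: "real \<Rightarrow> real \<Rightarrow> real" where
  "f_sc fb1 fb2 = min fb1 fb2"

definition ed_feasible ::
  "real \<Rightarrow> real \<Rightarrow> real \<Rightarrow> real \<Rightarrow> real \<times> real \<Rightarrow> real \<times> real \<Rightarrow> (real \<times> real) set" where
  "ed_feasible B1 B2 fb1 fb2 qbar d =
     {q. 0 \<le> fst q \<and> fst q \<le> fst qbar \<and> 0 \<le> snd q \<and> snd q \<le> snd qbar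
         \<and> fst q + snd q = fst d + snd d
         \<and> - f_ed B1 B2 fb1 fb2 \<le> fst q - fst d \<and> fst q - fst d \<le> f_ed B1 B2 fb1 fb2}"

text \<open>Feasible set of SCED-2b: ED-2b plus the post-contingency constraint.\<close>
definition sced_feasible ::
  "real \<Rightarrow> real \<Rightarrow> real \<Rightarrow> real \<Rightarrow> real \<times> real \<Rightarrow> real \<times> real \<Rightarrow> (real \<times> real) set" where
  "sced_feasible B1 B2 fb1 fb2 qbar d =
     {q. q \<in> ed_feasible B1 B2 fb1 fb2 qbar d
         \<and> - f_sc fb1 fb2 \<le> fst q - fst d \<and> fst q - fst d \<le> f_sc fb1 fb2}"

definition cost :: "real \<Rightarrow> real \<Rightarrow> real \<times> real \<Rightarrow> real" where
  "cost a1 a2 q = a1 * fst q + a2 * snd q"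

definition c_ed :: "real \<Rightarrow> real \<Rightarrow> real \<Rightarrow> real \<Rightarrow> real \<Rightarrow> real \<Rightarrow> real \<times> real \<Rightarrow> real \<times> real \<Rightarrow> real" where
  "c_ed a1 a2 B1 B2 fb1 fb2 qbar d = Inf (cost a1 a2 ` ed_feasible B1 B2 fb1 fb2 qbar d)"

definition c_sc :: "real \<Rightarrow> real \<Rightarrow> real \<Rightarrow> real \<Rightarrow> real \<Rightarrow> real \<Rightarrow> real \<times> real \<Rightarrow> real \<times> real \<Rightarrow> real" where
  "c_sc a1 a2 B1 B2 fb1 fb2 qbar d = Inf (cost a1 a2 ` sced_feasible B1 B2 fb1 fb2 qbar d)"

definition PoS :: "real \<Rightarrow> real \<Rightarrow> real \<Rightarrow> real \<Rightarrow> real \<Rightarrow> real \<Rightarrow> real \<times> real \<Rightarrow> real \<times> real \<Rightarrow> real" where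
  "PoS a1 a2 B1 B2 fb1 fb2 qbar d =
     c_sc a1 a2 B1 B2 fb1 fb2 qbar d / c_ed a1 a2 B1 B2 fb1 fb2 qbar d"

end

theory Submission imports Defs begin
lemma g_mono:
  fixes K C m m' Fs Fe d2 :: real
  assumes "0 \<le> K" "C - K*d2 > 0" "m' \<le> m" "m \<le> d2" "Fs \<le> Fe"
  shows "(C - K*min m' Fs)/(C - K*min m' Fe) \<le> (C - K*min m Fs)/(C - K*min m Fe)"
proof -
  have p1: "C - K*min m' Fe > 0" using assms
    by (smt (verit, ccfv_SIG) min.cobounded1 mult_left_mono)
  have p2: "C - K*min m Fe > 0" using assms
    by (smt (verit, ccfv_SIG) min.cobounded1 mult_left_mono)
  have "(C - K*min m' Fs)*(C - K*min m Fe) \<le> (C - K*min m Fs)*(C - K*min m' Fe)"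
  proof (cases "m \<le> Fs")
    case True then show ?thesis using assms by (simp add: min_def)
  next
    case F1: False
    show ?thesis
    proof (cases "m' \<le> Fs")
      case True
      have a: "C - K*min m' Fs = C - K*min m' Fe" using True assms by (simp add: min_def)
      have b: "C - K*min m Fe \<le> C - K*min m Fs" using assms F1
        by (smt (verit) min.mono mult_left_mono)
      show ?thesis unfolding a using p1 b by (simp add: mult.commute mult_left_mono)
    next
      case False
      have a: "C - K*min m' Fs = C - K*min m Fs" using False F1 by (simp add: min_def)
      have b: "C - K*min m Fe \<le> C - K*min m' Fe" using assms
        by (smt (verit) min.mono mult_left_mono)
      have c: "C - K*min m Fs > 0" using assms
        by (smt (verit, ccfv_SIG) min.cobounded1 mult_left_mono)
      show ?thesis unfolding a using c b by (simp add: mult_left_mono)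
    qed
  qed
  then show ?thesis using p1 p2 by (simp add: divide_simps)
qed
definition AF :: "real \<Rightarrow> real \<times> real \<Rightarrow> real \<times> real \<Rightarrow> (real \<times> real) set" where
  "AF F qbar d = {q. 0 \<le> fst q \<and> fst q \<le> fst qbar \<and> 0 \<le> snd q \<and> snd q \<le> snd qbar
         \<and> fst q + snd q = fst d + snd d \<and> - F \<le> fst q - fst d \<and> fst q - fst d \<le> F}"

lemma ed_AF: "ed_feasible B1 B2 fb1 fb2 qbar d = AF (f_ed B1 B2 fb1 fb2) qbar d"
  unfolding ed_feasible_def AF_def by simp

lemma sc_AF: "sced_feasible B1 B2 fb1 fb2 qbar d = AF (min (f_ed B1 B2 fb1 fb2) (f_sc fb1 fb2)) qbar d"
  unfolding sced_feasible_def ed_feasible_def AF_def by auto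

lemma opt:
  assumes "AF F qbar d \<noteq> {}" "a1 \<le> a2"
  shows "Inf (cost a1 a2 ` AF F qbar d) = a1 * fst d + a2 * snd d - (a2 - a1) * min (min (fst qbar - fst d) (snd d)) F"
proof (rule cInf_eq_minimum)
  obtain q where q: "q \<in> AF F qbar d" using assms by auto
  define x where "x = min (min (fst qbar - fst d) (snd d)) F"
  have "(fst d + x, snd d - x) \<in> AF F qbar d" using q unfolding AF_def x_def by auto
  moreover have "cost a1 a2 (fst d + x, snd d - x) = a1 * fst d + a2 * snd d - (a2 - a1) * x"
    unfolding cost_def by (simp add: algebra_simps)
  ultimately show "a1 * fst d + a2 * snd d - (a2 - a1) * min (min (fst qbar - fst d) (snd d)) F \<in> cost a1 a2 ` AF F qbar d"
    unfolding x_def by (metis image_eqI)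
next
  fix c assume "c \<in> cost a1 a2 ` AF F qbar d"
  then obtain q where q: "q \<in> AF F qbar d" and c: "c = cost a1 a2 q" by auto
  define x where "x = fst q - fst d"
  have xle: "x \<le> min (min (fst qbar - fst d) (snd d)) F" using q unfolding AF_def x_def by auto
  have s1: "snd q = snd d - x" using q unfolding AF_def x_def by auto
  have s2: "fst q = fst d + x" unfolding x_def by simp
  have "c = a1 * fst d + a2 * snd d - (a2 - a1) * x" unfolding c cost_def s1 s2
    by (simp add: algebra_simps)
  then show "a1 * fst d + a2 * snd d - (a2 - a1) * min (min (fst qbar - fst d) (snd d)) F \<le> c"
    using xle assms(2) by (smt (verit) mult_left_mono)
qed

theorem lemma1:
  fixes a1 a2 B1 B2 fb1 fb2 :: real and qbar qbar' d :: "real \<times> real"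
  assumes "0 < a1" "a1 \<le> a2" "0 < B1" "0 < B2" "0 < fb1" "0 < fb2"
    and "0 \<le> fst qbar" "0 \<le> snd qbar" "0 \<le> fst qbar'" "0 \<le> snd qbar'"
    and "0 \<le> fst d" "0 \<le> snd d" "fst d + snd d > 0"
    and "snd qbar' = snd qbar" "fst qbar' \<le> fst qbar"
    and "ed_feasible B1 B2 fb1 fb2 qbar d \<noteq> {}"
    and "sced_feasible B1 B2 fb1 fb2 qbar d \<noteq> {}"
    and "ed_feasible B1 B2 fb1 fb2 qbar' d \<noteq> {}"
    and "sced_feasible B1 B2 fb1 fb2 qbar' d \<noteq> {}"
  shows "PoS a1 a2 B1 B2 fb1 fb2 qbar' d \<le> PoS a1 a2 B1 B2 fb1 fb2 qbar d"
proof -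
  define Fe where "Fe = f_ed B1 B2 fb1 fb2"
  define Fs where "Fs = min (f_ed B1 B2 fb1 fb2) (f_sc fb1 fb2)"
  define C where "C = a1 * fst d + a2 * snd d"
  define K where "K = a2 - a1"
  define m where "m = min (fst qbar - fst d) (snd d)"
  define m' where "m' = min (fst qbar' - fst d) (snd d)"
  have e: "PoS a1 a2 B1 B2 fb1 fb2 qbar d = (C - K*min m Fs)/(C - K*min m Fe)"
    unfolding PoS_def c_sc_def c_ed_def sc_AF ed_AF
    using assms(2,16,17) opt[of _ qbar d a1 a2]
    by (simp add: ed_AF sc_AF Fe_def Fs_def C_def K_def m_def)
  have e': "PoS a1 a2 B1 B2 fb1 fb2 qbar' d = (C - K*min m' Fs)/(C - K*min m' Fe)"
    unfolding PoS_def c_sc_def c_ed_def sc_AF ed_AF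
    using assms(2,18,19) opt[of _ qbar' d a1 a2]
    by (simp add: ed_AF sc_AF Fe_def Fs_def C_def K_def m'_def)
  have "C - K * snd d = a1 * (fst d + snd d)" unfolding C_def K_def by (simp add: algebra_simps)
  hence "C - K * snd d > 0" using assms(1,13) by simp
  moreover have "m' \<le> m" "m \<le> snd d" "Fs \<le> Fe" "0 \<le> K"
    using assms(2,15) unfolding m_def m'_def Fs_def Fe_def K_def by auto
  ultimately show ?thesis unfolding e e' by (rule g_mono[rotated])
qed
end
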